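(* Let $\Delta x>0$, $\Delta t>0$, let $a=(a_j)$, $b=(b_j)$ be sequences in $\ell^2_\Delta(\mathbb Z)$ (with $b$ bounded and $D_+b$ bounded) and $\sigma\in\{0,1\}$. Then $$\begin{aligned}\langle D_+D_+D_-(a),D(ab)\rangle\le{}&\frac{\Delta t}{4}\langle|D_+(b)|+|D_-(b)|,(D_+D_+D_-(a))^2\rangle+\frac{1}{4\Delta t}\langle|D_-(b)|+|D_+(b)|,a^2\rangle\\&+\frac12\Big\langle\|D_+(b)\|^\sigma_{\ell^\infty}\mathbf 1-\frac{\Delta x}{2}D_-(b),(D_+D_-(a))^2\Big\rangle+\frac12\|D_+(b)\|^{2-\sigma}_{\ell^\infty}\|D_+(a)\|^2_{\ell^2_\Delta}-\langle b,(D_+D(a))^2\rangle.\end{aligned}$$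
   Context: For sequences: $D_+(a)_j=(a_{j+1}-a_j)/\Delta x$, $D_-(a)_j=(a_j-a_{j-1})/\Delta x$, $D=\frac12(D_++D_-)$; products, squares and absolute values are componentwise; $\mathbf 1=(1,1,\dots)$; $\langle a,b\rangle=\Delta x\sum_ja_jb_j$, $\|a\|_{\ell^2_\Delta}=\langle a,a\rangle^{1/2}$, $\|a\|_{\ell^\infty}=\sup_j|a_j|$. *)

theory Defs
  imports "HOL-Analysis.Analysis"
begin

definition Dp :: "real \<Rightarrow> (int \<Rightarrow> real) \<Rightarrow> int \<Rightarrow> real" where
  "Dp dx a j = (a (j + 1) - a j) / dx"

definition Dm :: "real \<Rightarrow> (int \<Rightarrow> real) \<Rightarrow> int \<Rightarrow> real" where
  "Dm dx a j = (a j - a (j - 1)) / dx"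

definition Dc :: "real \<Rightarrow> (int \<Rightarrow> real) \<Rightarrow> int \<Rightarrow> real" where
  "Dc dx a j = (Dp dx a j + Dm dx a j) / 2"

definition ip :: "real \<Rightarrow> (int \<Rightarrow> real) \<Rightarrow> (int \<Rightarrow> real) \<Rightarrow> real" where
  "ip dx a b = dx * infsum (\<lambda>j. a j * b j) UNIV"

definition l2norm :: "real \<Rightarrow> (int \<Rightarrow> real) \<Rightarrow> real" where
  "l2norm dx a = sqrt (ip dx a a)"

definition linfnorm :: "(int \<Rightarrow> real) \<Rightarrow> real" where
  "linfnorm a = (SUP j. \<bar>a j\<bar>)"

definition in_l2 :: "(int \<Rightarrow> real) \<Rightarrow> bool" where
  "in_l2 a \<longleftrightarrow> (\<lambda>j. (a j)\<^sup>2) summable_on UNIV"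

end

theory Submission
  imports Defs
begin

definition gfun :: "real \<Rightarrow> (int \<Rightarrow> real) \<Rightarrow> (int \<Rightarrow> real) \<Rightarrow> int \<Rightarrow> real" where
  "gfun dx a b j = b j * Dc dx a j * Dp dx (Dm dx a) j / dx - b (j - 1) * (Dp dx (Dm dx a) j)\<^sup>2 / 4
     - Dp dx (Dm dx a) j * Dc dx a j * Dm dx b j"

definition Gfun :: "real \<Rightarrow> real \<Rightarrow> real \<Rightarrow> nat \<Rightarrow> (int \<Rightarrow> real) \<Rightarrow> (int \<Rightarrow> real) \<Rightarrow> int \<Rightarrow> real" where
  "Gfun dx dt L s a b j = gfun dx a b j + 1/(4*dt)*(\<bar>Dm dx b j\<bar>*(a j)\<^sup>2) - 1/(4*dt)*(\<bar>Dm dx b j\<bar>*(a (j-1))\<^sup>2)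
     - 1/2*L^(2-s)*(Dm dx a j)\<^sup>2"

definition Rfun :: "real \<Rightarrow> real \<Rightarrow> real \<Rightarrow> nat \<Rightarrow> (int \<Rightarrow> real) \<Rightarrow> (int \<Rightarrow> real) \<Rightarrow> int \<Rightarrow> real" where
  "Rfun dx dt L s a b j = dt / 4 * ((\<bar>Dp dx b j\<bar> + \<bar>Dm dx b j\<bar>) * (Dp dx (Dp dx (Dm dx a)) j)\<^sup>2)
     + 1 / (4 * dt) * ((\<bar>Dm dx b j\<bar> + \<bar>Dp dx b j\<bar>) * (a j)\<^sup>2)
     + 1 / 2 * ((L ^ s - dx / 2 * Dm dx b j) * (Dp dx (Dm dx a) j)\<^sup>2)
     + 1 / 2 * L ^ (2 - s) * (Dp dx a j * Dp dx a j)
     - b j * (Dp dx (Dc dx a) j)\<^sup>2"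

lemma I1:
  assumes "dx \<noteq> 0"
  shows "Dc dx (\<lambda>j. a j * b j) j = b j * Dc dx a j + 1/2 * a (j+1) * Dp dx b j + 1/2 * a (j-1) * Dm dx b j"
  using assms by (simp add: Dc_def Dp_def Dm_def field_simps)

lemma I2:
  assumes "dx \<noteq> 0"
  shows "Dp dx (Dp dx (Dm dx a)) j * b j * Dc dx a j = - b j * (Dp dx (Dc dx a) j)\<^sup>2
     - dx/4 * Dm dx b j * (Dp dx (Dm dx a) j)\<^sup>2 - Dm dx b j * Dp dx (Dm dx a) j * Dm dx a j
     + gfun dx a b (j+1) - gfun dx a b j"
  using assms by (simp add: gfun_def Dc_def Dp_def Dm_def field_simps power2_eq_square)

lemma young1:
  fixes x y c t :: real assumes "t > 0"
  shows "1/2 * x * y * c \<le> t/4 * \<bar>c\<bar> * x\<^sup>2 + 1/(4*t) * \<bar>c\<bar> * y\<^sup>2"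
proof -
  have "0 \<le> (t * \<bar>x\<bar> - \<bar>y\<bar>)\<^sup>2" by simp
  hence "2 * t * (\<bar>x\<bar> * \<bar>y\<bar>) \<le> t\<^sup>2 * x\<^sup>2 + y\<^sup>2" by (simp add: power2_eq_square algebra_simps)
  hence h: "\<bar>x\<bar> * \<bar>y\<bar> \<le> t/2 * x\<^sup>2 + 1/(2*t) * y\<^sup>2" using assms
    by (simp add: field_simps power2_eq_square)
  have "1/2 * x * y * c \<le> 1/2 * \<bar>c\<bar> * (\<bar>x\<bar> * \<bar>y\<bar>)"
    by (simp add: abs_mult[symmetric] abs_ge_self mult.commute mult.left_commute)
  also have "\<dots> \<le> 1/2 * \<bar>c\<bar> * (t/2 * x\<^sup>2 + 1/(2*t) * y\<^sup>2)"
    by (rule mult_left_mono[OF h]) simp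
  also have "\<dots> = t/4 * \<bar>c\<bar> * x\<^sup>2 + 1/(4*t) * \<bar>c\<bar> * y\<^sup>2" by (simp add: field_simps)
  finally show ?thesis .
qed

lemma young2:
  fixes M v q L :: real and s :: nat assumes "\<bar>M\<bar> \<le> L" "s \<in> {0,1}"
  shows "- M * v * q \<le> 1/2 * L^s * v\<^sup>2 + 1/2 * L^(2-s) * q\<^sup>2"
proof -
  have L0: "0 \<le> L" using assms(1) by linarith
  have "- M * v * q \<le> \<bar>M\<bar> * (\<bar>v\<bar> * \<bar>q\<bar>)"
    by (metis abs_ge_minus_self abs_minus_cancel abs_mult mult.assoc mult_minus_left)
  also have "\<dots> \<le> L * (\<bar>v\<bar> * \<bar>q\<bar>)" by (rule mult_right_mono[OF assms(1)]) simp
  also have "\<dots> \<le> 1/2 * L^s * v\<^sup>2 + 1/2 * L^(2-s) * q\<^sup>2"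
  proof (cases "s = 0")
    case True
    have "0 \<le> (\<bar>v\<bar> - L * \<bar>q\<bar>)\<^sup>2" by simp
    thus ?thesis using True by (simp add: power2_eq_square algebra_simps)
  next
    case False
    hence s1: "s = 1" using assms(2) by auto
    have "0 \<le> L * (\<bar>v\<bar> - \<bar>q\<bar>)\<^sup>2" using L0 by simp
    thus ?thesis using s1 by (simp add: power2_eq_square algebra_simps)
  qed
  finally show ?thesis .
qed

lemma pw:
  assumes dx: "dx > 0" and dt: "dt > 0" and LP: "\<And>i. \<bar>Dp dx b i\<bar> \<le> L" and s: "s \<in> {0,1}"
  shows "Dp dx (Dp dx (Dm dx a)) j * Dc dx (\<lambda>j. a j * b j) j
     \<le> Rfun dx dt L s a b j + (Gfun dx dt L s a b (j+1) - Gfun dx dt L s a b j)"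
proof -
  have dx0: "dx \<noteq> 0" using dx by simp
  have sM: "Dm dx b (j+1) = Dp dx b j" by (simp add: Dm_def Dp_def)
  have sq: "Dm dx a (j+1) = Dp dx a j" by (simp add: Dm_def Dp_def)
  have LM: "\<bar>Dm dx b j\<bar> \<le> L" using LP[of "j-1"] by (simp add: Dm_def Dp_def)
  note Y1 = young1[OF dt, of "Dp dx (Dp dx (Dm dx a)) j" "a (j+1)" "Dp dx b j"]
  note Y2 = young1[OF dt, of "Dp dx (Dp dx (Dm dx a)) j" "a (j-1)" "Dm dx b j"]
  note Y3 = young2[OF LM s, of "Dp dx (Dm dx a) j" "Dm dx a j"]
  have E: "Rfun dx dt L s a b j + (Gfun dx dt L s a b (j+1) - Gfun dx dt L s a b j)
    = dt/4 * \<bar>Dp dx b j\<bar> * (Dp dx (Dp dx (Dm dx a)) j)\<^sup>2 + 1/(4*dt) * \<bar>Dp dx b j\<bar> * (a (j+1))\<^sup>2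
    + (dt/4 * \<bar>Dm dx b j\<bar> * (Dp dx (Dp dx (Dm dx a)) j)\<^sup>2 + 1/(4*dt) * \<bar>Dm dx b j\<bar> * (a (j-1))\<^sup>2)
    + (1/2 * L^s * (Dp dx (Dm dx a) j)\<^sup>2 + 1/2 * L^(2-s) * (Dm dx a j)\<^sup>2)
    - b j * (Dp dx (Dc dx a) j)\<^sup>2 - dx/4 * Dm dx b j * (Dp dx (Dm dx a) j)\<^sup>2
    + gfun dx a b (j+1) - gfun dx a b j"
    unfolding Rfun_def Gfun_def sM sq using dt by (simp add: field_simps power2_eq_square)
  show ?thesis unfolding E I1[OF dx0] distrib_left
    using I2[OF dx0, of a j b] Y1 Y2 Y3 by (simp add: algebra_simps) 
qed

definition bdd :: "(int \<Rightarrow> real) \<Rightarrow> bool" where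
  "bdd c \<longleftrightarrow> (\<exists>B. \<forall>j. \<bar>c j\<bar> \<le> B)"

lemma bij_shift: "bij_betw (\<lambda>j::int. j + k) UNIV UNIV"
  by (rule bij_betwI[where g="\<lambda>j. j - k"]) auto

lemma summable_shift: "f summable_on UNIV \<Longrightarrow> (\<lambda>j::int. f (j + k)) summable_on UNIV"
  using summable_on_reindex_bij_betw[OF bij_shift[of k], of f] by simp

lemma has_sum_shift: "(f has_sum S) UNIV \<Longrightarrow> ((\<lambda>j::int. f (j + k)) has_sum S) UNIV"
  using has_sum_reindex_bij_betw[OF bij_shift[of k], of f] by simp

lemma l2_shift: "in_l2 f \<Longrightarrow> in_l2 (\<lambda>j. f (j + k))"
  unfolding in_l2_def by (rule summable_shift[where f="\<lambda>j. (f j)\<^sup>2"])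

lemma l2_shiftm: "in_l2 f \<Longrightarrow> in_l2 (\<lambda>j. f (j - k))"
  using l2_shift[of f "-k"] by simp

lemma l2_add: assumes "in_l2 f" "in_l2 g" shows "in_l2 (\<lambda>j. f j + g j)"
  unfolding in_l2_def
proof (rule summable_on_comparison_test)
  show "(\<lambda>j. 2 * (f j)\<^sup>2 + 2 * (g j)\<^sup>2) summable_on UNIV"
    using assms unfolding in_l2_def
    by (intro summable_on_add summable_on_cmult_right)
  fix j
  have "0 \<le> (f j - g j)\<^sup>2" by simp
  thus "(f j + g j)\<^sup>2 \<le> 2 * (f j)\<^sup>2 + 2 * (g j)\<^sup>2" by (simp add: power2_eq_square algebra_simps)
qed simp

lemma l2_bddmult: assumes "bdd c" "in_l2 f" shows "in_l2 (\<lambda>j. c j * f j)"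
proof -
  obtain B where B: "\<And>j. \<bar>c j\<bar> \<le> B" using assms(1) unfolding bdd_def by blast
  show ?thesis unfolding in_l2_def
  proof (rule summable_on_comparison_test)
    show "(\<lambda>j. B\<^sup>2 * (f j)\<^sup>2) summable_on UNIV"
      using assms(2) unfolding in_l2_def by (intro summable_on_cmult_right)
    fix j
    have "\<bar>c j\<bar>\<^sup>2 \<le> B\<^sup>2" using B[of j] by (intro power_mono) auto
    hence "(c j)\<^sup>2 * (f j)\<^sup>2 \<le> B\<^sup>2 * (f j)\<^sup>2" by (intro mult_right_mono) auto
    thus "(c j * f j)\<^sup>2 \<le> B\<^sup>2 * (f j)\<^sup>2" by (simp add: power_mult_distrib)
  qed simp
qed

lemma bdd_const: "bdd (\<lambda>j. c)" unfolding bdd_def by auto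

lemma l2_cmult: "in_l2 f \<Longrightarrow> in_l2 (\<lambda>j. c * f j)"
  using l2_bddmult[OF bdd_const] by blast

lemma l2_diff: "in_l2 f \<Longrightarrow> in_l2 g \<Longrightarrow> in_l2 (\<lambda>j. f j - g j)"
  using l2_add[of f "\<lambda>j. (-1) * g j"] l2_cmult[of g "-1"] by simp

lemma l2_Dp: "in_l2 f \<Longrightarrow> in_l2 (Dp dx f)"
proof -
  assume f: "in_l2 f"
  have "in_l2 (\<lambda>j. (1/dx) * (f (j+1) - f j))"
    by (intro l2_cmult l2_diff l2_shift f)
  moreover have "(\<lambda>j. (1/dx) * (f (j+1) - f j)) = Dp dx f" by (auto simp: Dp_def)
  ultimately show ?thesis by simp
qed

lemma l2_Dm: "in_l2 f \<Longrightarrow> in_l2 (Dm dx f)"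
proof -
  assume f: "in_l2 f"
  have "in_l2 (\<lambda>j. (1/dx) * (f j - f (j - 1)))"
    by (intro l2_cmult l2_diff l2_shiftm f)
  moreover have "(\<lambda>j. (1/dx) * (f j - f (j - 1))) = Dm dx f" by (auto simp: Dm_def)
  ultimately show ?thesis by simp
qed

lemma l2_Dc: "in_l2 f \<Longrightarrow> in_l2 (Dc dx f)"
proof -
  assume f: "in_l2 f"
  have "in_l2 (\<lambda>j. (1/2) * (Dp dx f j + Dm dx f j))"
    by (intro l2_cmult l2_add l2_Dp l2_Dm f)
  moreover have "(\<lambda>j. (1/2) * (Dp dx f j + Dm dx f j)) = Dc dx f" by (auto simp: Dc_def)
  ultimately show ?thesis by simp
qed

lemma prod_summable: assumes "in_l2 f" "in_l2 g" shows "(\<lambda>j. f j * g j) summable_on UNIV"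
proof -
  have "(\<lambda>j. 1/4 * (f j + g j)\<^sup>2 + (-1/4) * (f j - g j)\<^sup>2) summable_on UNIV"
    using l2_add[OF assms] l2_diff[OF assms] unfolding in_l2_def
    by (intro summable_on_add summable_on_cmult_right)
  moreover have "(\<lambda>j. 1/4 * (f j + g j)\<^sup>2 + (-1/4) * (f j - g j)\<^sup>2) = (\<lambda>j. f j * g j)"
    by (auto simp: power2_eq_square algebra_simps)
  ultimately show ?thesis by simp
qed

lemma triple_summable: assumes "bdd c" "in_l2 f" "in_l2 g"
  shows "(\<lambda>j. c j * (f j * g j)) summable_on UNIV"
  using prod_summable[OF l2_bddmult[OF assms(1,2)] assms(3)] by (simp add: mult.assoc)

lemma sq_summable: assumes "bdd c" "in_l2 f"
  shows "(\<lambda>j. c j * (f j)\<^sup>2) summable_on UNIV"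
  using triple_summable[OF assms assms(2)] by (simp add: power2_eq_square)

lemma bdd_add: "bdd f \<Longrightarrow> bdd g \<Longrightarrow> bdd (\<lambda>j. f j + g j)"
  unfolding bdd_def by (metis abs_triangle_ineq add_mono order_trans)

lemma bdd_mult: "bdd f \<Longrightarrow> bdd g \<Longrightarrow> bdd (\<lambda>j. f j * g j)"
  unfolding bdd_def
proof (elim exE)
  fix B C assume B: "\<forall>j. \<bar>f j\<bar> \<le> B" and C: "\<forall>j. \<bar>g j\<bar> \<le> C"
  have "\<forall>j. \<bar>f j * g j\<bar> \<le> B * C"
    using B C by (simp add: abs_mult mult_mono')
  thus "\<exists>B. \<forall>j. \<bar>f j * g j\<bar> \<le> B" by blast
qed

lemma bdd_abs: "bdd f \<Longrightarrow> bdd (\<lambda>j. \<bar>f j\<bar>)" unfolding bdd_def by simp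

lemma bdd_diff: "bdd f \<Longrightarrow> bdd g \<Longrightarrow> bdd (\<lambda>j. f j - g j)"
  using bdd_add[of f "\<lambda>j. (-1) * g j"] bdd_mult[OF bdd_const[of "-1"], of g] by simp

lemma bdd_shift: "bdd f \<Longrightarrow> bdd (\<lambda>j. f (j + k))" unfolding bdd_def by blast

lemma bdd_bounded: "bounded (range f) \<Longrightarrow> bdd f"
  unfolding bdd_def bounded_iff by auto

lemma hs_diff:
  fixes f g :: "int \<Rightarrow> real"
  assumes "(f has_sum x) A" "(g has_sum y) A"
  shows "((\<lambda>j. f j - g j) has_sum (x - y)) A"
  using has_sum_add[OF assms(1) has_sum_cmult_right[OF assms(2), of "-1"]] by simp

lemma hs_inf: "f summable_on UNIV \<Longrightarrow> (f has_sum infsum f UNIV) UNIV"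
  by simp

theorem lemma9:
  fixes dx dt :: real and a b :: "int \<Rightarrow> real" and \<sigma> :: nat
  assumes "dx > 0" and "dt > 0"
    and "in_l2 a" and "in_l2 b"
    and "bounded (range b)" and "bounded (range (Dp dx b))"
    and "\<sigma> \<in> {0, 1}"
  shows "ip dx (Dp dx (Dp dx (Dm dx a))) (Dc dx (\<lambda>j. a j * b j))
    \<le> dt / 4 * ip dx (\<lambda>j. \<bar>Dp dx b j\<bar> + \<bar>Dm dx b j\<bar>) (\<lambda>j. (Dp dx (Dp dx (Dm dx a)) j)\<^sup>2)
     + 1 / (4 * dt) * ip dx (\<lambda>j. \<bar>Dm dx b j\<bar> + \<bar>Dp dx b j\<bar>) (\<lambda>j. (a j)\<^sup>2)
     + 1 / 2 * ip dx (\<lambda>j. linfnorm (Dp dx b) ^ \<sigma> - dx / 2 * Dm dx b j) (\<lambda>j. (Dp dx (Dm dx a) j)\<^sup>2)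
     + 1 / 2 * linfnorm (Dp dx b) ^ (2 - \<sigma>) * (l2norm dx (Dp dx a))\<^sup>2
     - ip dx b (\<lambda>j. (Dp dx (Dc dx a) j)\<^sup>2)"
proof -
  define L where "L = linfnorm (Dp dx b)"
  have dx0: "dx \<noteq> 0" using assms by simp
  have bddP: "bdd (Dp dx b)" using assms(6) by (rule bdd_bounded)
  have bddb: "bdd b" using assms(5) by (rule bdd_bounded)
  have Mshift: "Dm dx b = (\<lambda>j. Dp dx b (j + (-1)))" by (auto simp: Dm_def Dp_def)
  have bddM: "bdd (Dm dx b)" unfolding Mshift by (rule bdd_shift[OF bddP])
  have bddb1: "bdd (\<lambda>j. b (j - 1))" using bdd_shift[OF bddb, of "-1"] by simp
  have LP: "\<bar>Dp dx b i\<bar> \<le> L" for i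
  proof -
    from bddP obtain B where "\<forall>j. \<bar>Dp dx b j\<bar> \<le> B" unfolding bdd_def by blast
    hence "bdd_above (range (\<lambda>j. \<bar>Dp dx b j\<bar>))" by (auto intro: bdd_aboveI2)
    thus "\<bar>Dp dx b i\<bar> \<le> L" unfolding L_def linfnorm_def by (intro cSUP_upper) auto
  qed
  note la = assms(3)
  have lw: "in_l2 (Dp dx (Dp dx (Dm dx a)))" by (intro l2_Dp l2_Dm la)
  have lv: "in_l2 (Dp dx (Dm dx a))" by (intro l2_Dp l2_Dm la)
  have lu: "in_l2 (Dc dx a)" by (intro l2_Dc la)
  have lm: "in_l2 (Dp dx (Dc dx a))" by (intro l2_Dp l2_Dc la)
  have lp: "in_l2 (Dp dx a)" by (intro l2_Dp la)
  have lq: "in_l2 (Dm dx a)" by (intro l2_Dm la)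
  have la1: "in_l2 (\<lambda>j. a (j - 1))" by (intro l2_shiftm la)
  have lab: "in_l2 (\<lambda>j. a j * b j)" using l2_bddmult[OF bddb la] by (simp add: mult.commute)
  have ldab: "in_l2 (Dc dx (\<lambda>j. a j * b j))" by (intro l2_Dc lab)

  define SL where "SL = infsum (\<lambda>j. Dp dx (Dp dx (Dm dx a)) j * Dc dx (\<lambda>j. a j * b j) j) UNIV"
  define S1 where "S1 = infsum (\<lambda>j. (\<bar>Dp dx b j\<bar> + \<bar>Dm dx b j\<bar>) * (Dp dx (Dp dx (Dm dx a)) j)\<^sup>2) UNIV"
  define S2 where "S2 = infsum (\<lambda>j. (\<bar>Dm dx b j\<bar> + \<bar>Dp dx b j\<bar>) * (a j)\<^sup>2) UNIV"
  define S3 where "S3 = infsum (\<lambda>j. (L ^ \<sigma> - dx / 2 * Dm dx b j) * (Dp dx (Dm dx a) j)\<^sup>2) UNIV"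
  define S4 where "S4 = infsum (\<lambda>j. Dp dx a j * Dp dx a j) UNIV"
  define S5 where "S5 = infsum (\<lambda>j. b j * (Dp dx (Dc dx a) j)\<^sup>2) UNIV"
  define SG where "SG = infsum (Gfun dx dt L \<sigma> a b) UNIV"

  have hL: "((\<lambda>j. Dp dx (Dp dx (Dm dx a)) j * Dc dx (\<lambda>j. a j * b j) j) has_sum SL) UNIV"
    unfolding SL_def by (intro hs_inf prod_summable lw ldab)
  have h1: "((\<lambda>j. (\<bar>Dp dx b j\<bar> + \<bar>Dm dx b j\<bar>) * (Dp dx (Dp dx (Dm dx a)) j)\<^sup>2) has_sum S1) UNIV"
    unfolding S1_def by (intro hs_inf sq_summable bdd_add bdd_abs bddP bddM lw)
  have h2: "((\<lambda>j. (\<bar>Dm dx b j\<bar> + \<bar>Dp dx b j\<bar>) * (a j)\<^sup>2) has_sum S2) UNIV"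
    unfolding S2_def by (intro hs_inf sq_summable bdd_add bdd_abs bddP bddM la)
  have bdd3: "bdd (\<lambda>j. L ^ \<sigma> - dx / 2 * Dm dx b j)"
    by (intro bdd_diff bdd_const bdd_mult bddM)
  have h3: "((\<lambda>j. (L ^ \<sigma> - dx / 2 * Dm dx b j) * (Dp dx (Dm dx a) j)\<^sup>2) has_sum S3) UNIV"
    unfolding S3_def by (intro hs_inf sq_summable bdd3 lv)
  have h4: "((\<lambda>j. Dp dx a j * Dp dx a j) has_sum S4) UNIV"
    unfolding S4_def by (intro hs_inf prod_summable lp)
  have h5: "((\<lambda>j. b j * (Dp dx (Dc dx a) j)\<^sup>2) has_sum S5) UNIV"
    unfolding S5_def by (intro hs_inf sq_summable bddb lm)
  define SR where "SR = dt / 4 * S1 + 1 / (4 * dt) * S2 + 1 / 2 * S3 + 1 / 2 * L ^ (2 - \<sigma>) * S4 - S5"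
  have hR: "(Rfun dx dt L \<sigma> a b has_sum SR) UNIV"
  proof -
    have "((\<lambda>j. dt / 4 * ((\<bar>Dp dx b j\<bar> + \<bar>Dm dx b j\<bar>) * (Dp dx (Dp dx (Dm dx a)) j)\<^sup>2)
     + 1 / (4 * dt) * ((\<bar>Dm dx b j\<bar> + \<bar>Dp dx b j\<bar>) * (a j)\<^sup>2)
     + 1 / 2 * ((L ^ \<sigma> - dx / 2 * Dm dx b j) * (Dp dx (Dm dx a) j)\<^sup>2)
     + 1 / 2 * L ^ (2 - \<sigma>) * (Dp dx a j * Dp dx a j)
     - b j * (Dp dx (Dc dx a) j)\<^sup>2) has_sum SR) UNIV"
      unfolding SR_def
      by (intro hs_diff has_sum_add has_sum_cmult_right h1 h2 h3 h4 h5)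
    thus ?thesis unfolding Rfun_def by (simp add: fun_eq_iff)
  qed
  have Geq: "Gfun dx dt L \<sigma> a b = (\<lambda>j. (1/dx * b j) * (Dc dx a j * Dp dx (Dm dx a) j)
      + (-1/4 * b (j - 1)) * (Dp dx (Dm dx a) j * Dp dx (Dm dx a) j)
      + (-1 * Dm dx b j) * (Dp dx (Dm dx a) j * Dc dx a j)
      + (1/(4*dt) * \<bar>Dm dx b j\<bar>) * (a j * a j)
      + (-1/(4*dt) * \<bar>Dm dx b j\<bar>) * (a (j - 1) * a (j - 1))
      + (-1/2 * L^(2-\<sigma>)) * (Dm dx a j * Dm dx a j))"
    by (auto simp: fun_eq_iff Gfun_def gfun_def power2_eq_square algebra_simps)
  have sG: "Gfun dx dt L \<sigma> a b summable_on UNIV"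
    unfolding Geq
    by (intro summable_on_add triple_summable bdd_mult bdd_const bdd_abs bddb bddb1 bddM
        lu lv la la1 lq)
  have hG: "(Gfun dx dt L \<sigma> a b has_sum SG) UNIV" unfolding SG_def by (rule hs_inf[OF sG])
  have hG1: "((\<lambda>j. Gfun dx dt L \<sigma> a b (j + 1)) has_sum SG) UNIV" by (rule has_sum_shift[OF hG])
  have hRG: "((\<lambda>j. Rfun dx dt L \<sigma> a b j + (Gfun dx dt L \<sigma> a b (j + 1) - Gfun dx dt L \<sigma> a b j))
     has_sum (SR + (SG - SG))) UNIV"
    by (intro has_sum_add hs_diff hR hG1 hG)
  have "SL \<le> SR + (SG - SG)"
    by (rule has_sum_mono[OF hL hRG]) (rule pw[OF assms(1,2) LP assms(7)])
  hence SLR: "SL \<le> SR" by simp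
  have S4nn: "0 \<le> S4" unfolding S4_def by (intro infsum_nonneg) simp
  have l2eq: "(l2norm dx (Dp dx a))\<^sup>2 = dx * S4"
    unfolding l2norm_def ip_def S4_def[symmetric] using S4nn assms(1) by simp
  have "dx * SL \<le> dx * SR" using SLR assms(1) by (intro mult_left_mono) auto
  thus ?thesis
    unfolding l2eq unfolding ip_def L_def[symmetric]
    unfolding SL_def[symmetric] S1_def[symmetric] S2_def[symmetric] S3_def[symmetric] S5_def[symmetric]
    unfolding SR_def by (simp add: algebra_simps)
qed
end
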